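(* Let $(X,p_X)$ be a non-empty partial metric space. Then there exist a p-Cauchy completion $(\tilde X,j)$ of $X$, a p-Cauchy complete partial metric space $Y$, and an isometric embedding $f\colon X\to Y$ such that there is no isometric embedding $\tilde f\colon\tilde X\to Y$ with $\tilde f\circ j=f$.
   Context: A partial metric on a set $X$ is a function $p_X\colon X\times X\to\mathbb{R}_{\geq0}$ such that for all $x,y,z\in X$: (P1) $p_X(x,x)=p_X(x,y)=p_X(y,y)$ implies $x=y$; (P2) $p_X(x,x)\leq p_X(x,y)$; (P3) $p_X(x,y)=p_X(y,x)$; (P4) $p_X(x,z)+p_X(y,y)\leq p_X(x,y)+p_X(y,z)$. For $x\in X$ and $\varepsilon>0$, $B_\varepsilon(x)=\{y\in X: p_X(x,y)<p_X(x,x)+\varepsilon\}$. A subset $A\subseteq X$ is dense in $X$ if for every $x\in X$ and $\varepsilon>0$ there is $y\in A$ with $y\in B_\varepsilon(x)$. A sequence $(x_n)$ in $X$ p-converges to $x\in X$ if $p_X(x,x)=\lim_{n}p_X(x,x_n)=\lim_{n}p_X(x_n,x_n)$; it is p-Cauchy if $\lim_{n,m\to\infty}p_X(x_n,x_m)$ exists and is finite. $X$ is p-Cauchy complete if every p-Cauchy sequence p-converges. An isometric embedding $i\colon X\to Y$ is a map with $p_Y(i(x),i(y))=p_X(x,y)$ for all $x,y$. A p-Cauchy completion of $X$ is a pair $(\bar X,i)$ where $\bar X$ is a p-Cauchy complete partial metric space and $i\colon X\to\bar X$ is an isometric embedding with $i(X)$ dense in $\bar X$. *)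

theory Defs
  imports Complex_Main
begin

definition partial_metric :: "'a set \<Rightarrow> ('a \<Rightarrow> 'a \<Rightarrow> real) \<Rightarrow> bool" where
  "partial_metric X p \<longleftrightarrow>
     (\<forall>x\<in>X. \<forall>y\<in>X. p x y \<ge> 0) \<and>
     (\<forall>x\<in>X. \<forall>y\<in>X. p x x = p x y \<and> p x y = p y y \<longrightarrow> x = y) \<and>
     (\<forall>x\<in>X. \<forall>y\<in>X. p x x \<le> p x y) \<and>
     (\<forall>x\<in>X. \<forall>y\<in>X. p x y = p y x) \<and>
     (\<forall>x\<in>X. \<forall>y\<in>X. \<forall>z\<in>X. p x z + p y y \<le> p x y + p y z)"

definition pball :: "'a set \<Rightarrow> ('a \<Rightarrow> 'a \<Rightarrow> real) \<Rightarrow> 'a \<Rightarrow> real \<Rightarrow> 'a set" where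
  "pball X p x e = {y \<in> X. p x y < p x x + e}"

definition p_dense :: "'a set \<Rightarrow> ('a \<Rightarrow> 'a \<Rightarrow> real) \<Rightarrow> 'a set \<Rightarrow> bool" where
  "p_dense X p A \<longleftrightarrow> A \<subseteq> X \<and> (\<forall>x\<in>X. \<forall>e>0. \<exists>y\<in>A. y \<in> pball X p x e)"

definition p_converges :: "('a \<Rightarrow> 'a \<Rightarrow> real) \<Rightarrow> (nat \<Rightarrow> 'a) \<Rightarrow> 'a \<Rightarrow> bool" where
  "p_converges p s x \<longleftrightarrow>
     (\<lambda>n. p x (s n)) \<longlonglongrightarrow> p x x \<and> (\<lambda>n. p (s n) (s n)) \<longlonglongrightarrow> p x x"

definition p_cauchy :: "('a \<Rightarrow> 'a \<Rightarrow> real) \<Rightarrow> (nat \<Rightarrow> 'a) \<Rightarrow> bool" where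
  "p_cauchy p s \<longleftrightarrow>
     (\<exists>L::real. \<forall>e>0. \<exists>N. \<forall>n\<ge>N. \<forall>m\<ge>N. \<bar>p (s n) (s m) - L\<bar> < e)"

definition p_complete :: "'a set \<Rightarrow> ('a \<Rightarrow> 'a \<Rightarrow> real) \<Rightarrow> bool" where
  "p_complete X p \<longleftrightarrow>
     (\<forall>s. range s \<subseteq> X \<and> p_cauchy p s \<longrightarrow> (\<exists>x\<in>X. p_converges p s x))"

definition isometric_embedding ::
  "'a set \<Rightarrow> ('a \<Rightarrow> 'a \<Rightarrow> real) \<Rightarrow> 'b set \<Rightarrow> ('b \<Rightarrow> 'b \<Rightarrow> real) \<Rightarrow> ('a \<Rightarrow> 'b) \<Rightarrow> bool" where
  "isometric_embedding X p Y q f \<longleftrightarrow>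
     f ` X \<subseteq> Y \<and> (\<forall>x\<in>X. \<forall>y\<in>X. q (f x) (f y) = p x y)"

definition p_cauchy_completion ::
  "'a set \<Rightarrow> ('a \<Rightarrow> 'a \<Rightarrow> real) \<Rightarrow> 'b set \<Rightarrow> ('b \<Rightarrow> 'b \<Rightarrow> real) \<Rightarrow> ('a \<Rightarrow> 'b) \<Rightarrow> bool" where
  "p_cauchy_completion X p Xt pt j \<longleftrightarrow>
     partial_metric Xt pt \<and> p_complete Xt pt \<and>
     isometric_embedding X p Xt pt j \<and> p_dense Xt pt (j ` X)"

end

theory Submission
  imports Defs "HOL-Analysis.Analysis"
begin


definition dd :: "('a \<Rightarrow> 'a \<Rightarrow> real) \<Rightarrow> 'a \<Rightarrow> 'a \<Rightarrow> real" where
  "dd p x y = 2 * p x y - p x x - p y y"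

definition SI :: "'a set \<Rightarrow> 'a option set" where
  "SI X = insert None (Some ` X)"

definition Kf :: "'a set \<Rightarrow> ('a \<Rightarrow> 'a \<Rightarrow> real) \<Rightarrow> 'a \<Rightarrow> 'a \<Rightarrow> 'a option \<Rightarrow> real" where
  "Kf X p x0 x = (\<lambda>u. case u of None \<Rightarrow> p x x | Some y \<Rightarrow> if y \<in> X then dd p x y - dd p x0 y else undefined)"

definition Tf :: "'a set \<Rightarrow> ('a \<Rightarrow> 'a \<Rightarrow> real) \<Rightarrow> 'a \<Rightarrow> 'a option \<Rightarrow> real" where
  "Tf X p x0 = (\<lambda>u. case u of None \<Rightarrow> p x0 x0 + 1 | Some y \<Rightarrow> if y \<in> X then 1 else undefined)"

locale pmctx =
  fixes X :: "'a set" and p :: "'a \<Rightarrow> 'a \<Rightarrow> real" and x0 :: 'a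
  assumes pm: "partial_metric X p" and x0X: "x0 \<in> X"
begin

lemma P0: "x \<in> X \<Longrightarrow> y \<in> X \<Longrightarrow> p x y \<ge> 0"
  using pm by (auto simp: partial_metric_def)
lemma P1: "x \<in> X \<Longrightarrow> y \<in> X \<Longrightarrow> p x x = p x y \<Longrightarrow> p x y = p y y \<Longrightarrow> x = y"
  using pm unfolding partial_metric_def by blast
lemma P2: "x \<in> X \<Longrightarrow> y \<in> X \<Longrightarrow> p x x \<le> p x y"
  using pm by (auto simp: partial_metric_def)
lemma P3: "x \<in> X \<Longrightarrow> y \<in> X \<Longrightarrow> p x y = p y x"
  using pm by (auto simp: partial_metric_def)
lemma P4: "x \<in> X \<Longrightarrow> y \<in> X \<Longrightarrow> z \<in> X \<Longrightarrow> p x z + p y y \<le> p x y + p y z"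
  using pm by (auto simp: partial_metric_def)

lemma dd_nonneg: "x \<in> X \<Longrightarrow> y \<in> X \<Longrightarrow> dd p x y \<ge> 0"
  using P2[of x y] P2[of y x] P3[of x y] by (simp add: dd_def)
lemma dd_self: "dd p x x = 0"
  by (simp add: dd_def)
lemma dd_sym: "x \<in> X \<Longrightarrow> y \<in> X \<Longrightarrow> dd p x y = dd p y x"
  using P3[of x y] by (simp add: dd_def)
lemma dd_tri: "x \<in> X \<Longrightarrow> y \<in> X \<Longrightarrow> z \<in> X \<Longrightarrow> dd p x z \<le> dd p x y + dd p y z"
  using P4[of x y z] by (simp add: dd_def)
lemma w_lip: "x \<in> X \<Longrightarrow> y \<in> X \<Longrightarrow> \<bar>p x x - p y y\<bar> \<le> dd p x y"
  using P2[of x y] P2[of y x] P3[of x y] by (simp add: dd_def abs_le_iff)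
lemma dd_lip: "x \<in> X \<Longrightarrow> y \<in> X \<Longrightarrow> z \<in> X \<Longrightarrow> \<bar>dd p x z - dd p y z\<bar> \<le> dd p x y"
  using dd_tri[of x y z] dd_tri[of y x z] dd_sym[of x y] by (simp add: abs_le_iff)

abbreviation "S \<equiv> SI X"
abbreviation "FS \<equiv> Met_TC.fspace S"
abbreviation "FD \<equiv> Met_TC.fdist S"
abbreviation "K \<equiv> Kf X p x0"
abbreviation "T \<equiv> Tf X p x0"

definition pF :: "('a option \<Rightarrow> real) \<Rightarrow> ('a option \<Rightarrow> real) \<Rightarrow> real" where
  "pF a b = (FD a b + \<bar>a None\<bar> + \<bar>b None\<bar>) / 2"

lemma pF2: "2 * pF a b = FD a b + \<bar>a None\<bar> + \<bar>b None\<bar>"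
  by (simp add: pF_def)

lemma S_ne: "S \<noteq> {}" by (simp add: SI_def)

lemma F_ms: "Metric_space FS FD"
  by (rule Met_TC.Metric_space_funspace)

lemma K_in: assumes "x \<in> X" shows "K x \<in> FS"
proof -
  have "\<forall>u\<in>S. dist 0 (K x u) \<le> p x x + dd p x x0"
  proof
    fix u assume "u \<in> S"
    then consider "u = None" | y where "u = Some y" "y \<in> X" by (auto simp: SI_def)
    then show "dist 0 (K x u) \<le> p x x + dd p x x0"
    proof cases
      case 1 then show ?thesis using P0[OF assms assms] dd_nonneg[OF assms x0X] by (simp add: Kf_def)
    next
      case 2 then show ?thesis using P0[OF assms assms] dd_lip[OF assms x0X 2(2)]
        by (simp add: Kf_def dist_real_def)
    qed
  qed
  then have "Met_TC.mbounded (K x ` S)"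
    by (auto simp: bounded_iff)
  moreover have "K x \<in> extensional S"
    by (auto simp: extensional_def SI_def Kf_def split: option.splits)
  ultimately show ?thesis by (simp add: Met_TC.fspace_def)
qed

lemma T_in: "T \<in> FS"
proof -
  have "\<forall>u\<in>S. dist 0 (T u) \<le> p x0 x0 + 1"
    using P0[OF x0X x0X] by (auto simp: SI_def Tf_def dist_real_def)
  then have "Met_TC.mbounded (T ` S)"
    by (auto simp: bounded_iff)
  moreover have "T \<in> extensional S"
    by (auto simp: extensional_def SI_def Tf_def split: option.splits)
  ultimately show ?thesis by (simp add: Met_TC.fspace_def)
qed

lemma FD_le_iff: "a \<in> FS \<Longrightarrow> b \<in> FS \<Longrightarrow> FD a b \<le> c \<longleftrightarrow> (\<forall>u\<in>S. \<bar>a u - b u\<bar> \<le> c)"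
  by (simp add: Met_TC.funspace_mdist_le[OF _ _ S_ne] dist_real_def)

lemma FD_ge: "a \<in> FS \<Longrightarrow> b \<in> FS \<Longrightarrow> u \<in> S \<Longrightarrow> \<bar>a u - b u\<bar> \<le> FD a b"
  using FD_le_iff[of a b "FD a b"] by auto

lemma None_S: "None \<in> S" by (simp add: SI_def)
lemma Some_S: "y \<in> X \<Longrightarrow> Some y \<in> S" by (simp add: SI_def)

lemma FD_K: assumes "x \<in> X" "y \<in> X" shows "FD (K x) (K y) = dd p x y"
proof (rule antisym)
  show "FD (K x) (K y) \<le> dd p x y"
  proof (subst FD_le_iff[OF K_in[OF assms(1)] K_in[OF assms(2)]], intro ballI)
    fix u assume "u \<in> S"
    then consider "u = None" | z where "u = Some z" "z \<in> X" by (auto simp: SI_def)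
    then show "\<bar>K x u - K y u\<bar> \<le> dd p x y"
    proof cases
      case 1 then show ?thesis using w_lip[OF assms] by (simp add: Kf_def)
    next
      case 2 then show ?thesis using dd_lip[OF assms 2(2)] by (simp add: Kf_def)
    qed
  qed
  show "dd p x y \<le> FD (K x) (K y)"
    using FD_ge[OF K_in[OF assms(1)] K_in[OF assms(2)] Some_S[OF assms(2)]] assms
      dd_nonneg[OF assms] by (simp add: Kf_def dd_self)
qed

lemma pF_K: assumes "x \<in> X" "y \<in> X" shows "pF (K x) (K y) = p x y"
proof -
  have "K x None = p x x" "K y None = p y y" by (simp_all add: Kf_def)
  then have "2 * pF (K x) (K y) = dd p x y + p x x + p y y"
    using pF2[of "K x" "K y"] FD_K[OF assms] P0[OF assms(1) assms(1)] P0[OF assms(2) assms(2)] by simp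
  then show ?thesis by (simp add: dd_def)
qed

lemma FD_TK: assumes "x \<in> X" shows "FD T (K x) \<ge> 1 + dd p x0 x"
  using FD_ge[OF T_in K_in[OF assms] Some_S[OF assms]] assms dd_nonneg[OF x0X assms]
  by (simp add: Kf_def Tf_def dd_self)

lemma FD_TK0: "FD T (K x0) = 1"
proof (rule antisym)
  show "FD T (K x0) \<le> 1"
    by (subst FD_le_iff[OF T_in K_in[OF x0X]]) (auto simp: SI_def Tf_def Kf_def)
  show "1 \<le> FD T (K x0)" using FD_TK[OF x0X] by (simp add: dd_self)
qed


interpretation F: Metric_space FS FD by (rule F_ms)

lemma None_lip: "a \<in> FS \<Longrightarrow> b \<in> FS \<Longrightarrow> \<bar>a None - b None\<bar> \<le> FD a b"
  using FD_ge[OF _ _ None_S] .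

lemma pF_self: "a \<in> FS \<Longrightarrow> pF a a = \<bar>a None\<bar>"
  by (simp add: pF_def)

lemma pm_F: assumes "A \<subseteq> FS" shows "partial_metric A pF"
  unfolding partial_metric_def
proof (intro conjI ballI impI)
  fix x y assume xy: "x \<in> A" "y \<in> A"
  then have xyF: "x \<in> FS" "y \<in> FS" using assms by auto
  have n: "FD x y \<ge> 0" by (rule F.nonneg)
  have z: "FD x x = 0" by (rule F.mdist_zero) (use xyF in auto)
  have c: "FD x y = FD y x" by (rule F.commute)
  have l: "\<bar>x None - y None\<bar> \<le> FD x y" by (rule None_lip[OF xyF])
  have zy: "FD y y = 0" by (rule F.mdist_zero) (use xyF in auto)
  note e = pF2[of x y] pF2[of x x] pF2[of y y] pF2[of y x]
  have l': "\<bar>x None\<bar> - \<bar>y None\<bar> \<le> FD x y" "\<bar>y None\<bar> - \<bar>x None\<bar> \<le> FD x y"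
    using l by (simp_all add: abs_le_iff) linarith+
  show "0 \<le> pF x y" using n abs_ge_zero[of "x None"] abs_ge_zero[of "y None"] e by linarith
  show "pF x x \<le> pF x y" using n l' z e by linarith
  show "pF x y = pF y x" using c e by linarith
  assume "pF x x = pF x y \<and> pF x y = pF y y"
  then have "FD x y = 0" using l' z zy e by linarith
  then show "x = y" using F.zero[OF xyF] by simp
next
  fix x y z assume xyz: "x \<in> A" "y \<in> A" "z \<in> A"
  then have "x \<in> FS" "y \<in> FS" "z \<in> FS" using assms by auto
  then show "pF x z + pF y y \<le> pF x y + pF y z"
    using F.triangle[of x y z] pF2[of x z] pF2[of y y] pF2[of x y] pF2[of y z] F.mdist_zero[of y] by linarith
qed

lemma pF_bound:
  assumes "a \<in> FS" "b \<in> FS"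
  shows "\<bar>pF a b - pF a a\<bar> \<le> FD a b" "\<bar>pF b b - pF a a\<bar> \<le> FD a b"
proof -
  have h: "\<bar>\<bar>a None\<bar> - \<bar>b None\<bar>\<bar> \<le> FD a b"
    using None_lip[OF assms] abs_triangle_ineq3[of "a None" "b None"] by linarith
  have n: "FD a b \<ge> 0" by (rule F.nonneg)
  note e = pF2[of a b] pF_self[OF assms(1)] pF_self[OF assms(2)]
  show "\<bar>pF a b - pF a a\<bar> \<le> FD a b" "\<bar>pF b b - pF a a\<bar> \<le> FD a b"
    using h n e unfolding abs_le_iff by linarith+
qed

lemma conv_lemma:
  fixes f g :: "nat \<Rightarrow> real"
  assumes "\<And>n. \<bar>f n - c\<bar> \<le> g n" "\<forall>e>0. \<exists>N. \<forall>n\<ge>N. g n < e"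
  shows "f \<longlonglongrightarrow> c"
proof (rule LIMSEQ_I)
  fix r :: real assume "r > 0"
  then obtain N where "\<forall>n\<ge>N. g n < r" using assms(2) by blast
  then show "\<exists>no. \<forall>n\<ge>no. norm (f n - c) < r" using assms(1) by (metis le_less_trans real_norm_def)
qed

lemma complete_F: assumes "closedin F.mtopology A" shows "p_complete A pF"
  unfolding p_complete_def
proof (intro allI impI)
  fix s assume as: "range s \<subseteq> A \<and> p_cauchy pF s"
  have AF: "A \<subseteq> FS" using closedin_subset[OF assms] by simp
  then have sF: "\<And>n. s n \<in> FS" using as by auto
  obtain L where L: "\<forall>e>0. \<exists>N. \<forall>n\<ge>N. \<forall>m\<ge>N. \<bar>pF (s n) (s m) - L\<bar> < e"
    using as by (auto simp: p_cauchy_def)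
  have "F.MCauchy s"
    unfolding F.MCauchy_def
  proof (intro conjI allI impI)
    show "range s \<subseteq> FS" using sF by auto
    fix e :: real assume "e > 0"
    then obtain N where N: "\<forall>n\<ge>N. \<forall>m\<ge>N. \<bar>pF (s n) (s m) - L\<bar> < e/4"
      using L by (meson divide_pos_pos zero_less_numeral)
    show "\<exists>N. \<forall>n n'. N \<le> n \<longrightarrow> N \<le> n' \<longrightarrow> FD (s n) (s n') < e"
    proof (intro exI allI impI)
      fix n n' assume "N \<le> n" "N \<le> n'"
      then have "\<bar>pF (s n) (s n') - L\<bar> < e/4" "\<bar>pF (s n) (s n) - L\<bar> < e/4" "\<bar>pF (s n') (s n') - L\<bar> < e/4"
        using N by auto
      note h = this[unfolded abs_less_iff]
      show "FD (s n) (s n') < e" using h pF2[of "s n" "s n'"] pF_self[OF sF[of n]] pF_self[OF sF[of n']]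
        by linarith
    qed
  qed
  then obtain l where l: "limitin F.mtopology s l sequentially"
  proof -
    have "mcomplete_of (funspace S (Met_TC.Self :: real metric))" by (rule Met_TC.mcomplete_funspace) (simp add: complete_UNIV)
    then show ?thesis using that \<open>F.MCauchy s\<close> by (auto simp: mcomplete_of_def F.mcomplete_def)
  qed
  have lA: "l \<in> A"
    by (rule limitin_closedin[OF l assms]) (use as in \<open>auto intro: always_eventually\<close>)
  then have lF: "l \<in> FS" using AF by auto
  have g: "\<forall>e>0. \<exists>N. \<forall>n\<ge>N. FD (s n) l < e"
    using l unfolding F.limit_metric_sequentially by blast
  have "(\<lambda>n. pF l (s n)) \<longlonglongrightarrow> pF l l"
  proof (rule conv_lemma[OF _ g])
    fix n show "\<bar>pF l (s n) - pF l l\<bar> \<le> FD (s n) l"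
      using pF_bound(1)[OF lF sF[of n]] F.commute[of l "s n"] by simp
  qed
  moreover have "(\<lambda>n. pF (s n) (s n)) \<longlonglongrightarrow> pF l l"
  proof (rule conv_lemma[OF _ g])
    fix n show "\<bar>pF (s n) (s n) - pF l l\<bar> \<le> FD (s n) l"
      using pF_bound(2)[OF lF sF[of n]] F.commute[of l "s n"] by simp
  qed
  ultimately show "\<exists>x\<in>A. p_converges pF s x" using lA by (auto simp: p_converges_def)
qed

abbreviation "Z \<equiv> F.mtopology closure_of (K ` X)"

lemma KX_F: "K ` X \<subseteq> FS" using K_in by auto

lemma KX_Z: "K ` X \<subseteq> Z"
  using closure_of_subset[of "K ` X" F.mtopology] KX_F by simp

lemma Z_F: "Z \<subseteq> FS"
  using closure_of_subset_topspace[of F.mtopology "K ` X"] by simp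

lemma Z_near: assumes "a \<in> Z" "r > 0" shows "\<exists>x\<in>X. FD a (K x) < r"
  using assms unfolding F.metric_closure_of by (auto simp: F.mball_def)

lemma ZT_closed: "closedin F.mtopology (Z \<union> {T})"
proof (rule closedin_Un)
  show "closedin F.mtopology Z" by simp
  show "closedin F.mtopology {T}"
    by (rule closedin_t1_singleton) (auto simp: T_in intro: Hausdorff_imp_t1_space F.Hausdorff_space_mtopology)
qed

lemma dense_ZT: "p_dense (Z \<union> {T}) pF (K ` X)"
  unfolding p_dense_def
proof (intro conjI ballI allI impI)
  show "K ` X \<subseteq> Z \<union> {T}" using KX_Z by auto
  fix a e assume a: "a \<in> Z \<union> {T}" and e: "(e::real) > 0"
  show "\<exists>y\<in>K ` X. y \<in> pball (Z \<union> {T}) pF a e"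
  proof (cases "a = T")
    case True
    have t1: "FD T T = 0" using T_in by simp
    have t2: "T None = p x0 x0 + 1" "K x0 None = p x0 x0" by (simp_all add: Tf_def Kf_def)
    have "pF T (K x0) = pF T T"
      using pF2[of T "K x0"] pF_self[OF T_in] t2 FD_TK0 P0[OF x0X x0X] by simp
    then have "K x0 \<in> pball (Z \<union> {T}) pF a e" using True e x0X KX_Z by (auto simp: pball_def)
    then show ?thesis using x0X by blast
  next
    case False
    then have aZ: "a \<in> Z" using a by auto
    then have aF: "a \<in> FS" using Z_F by auto
    obtain x where x: "x \<in> X" "FD a (K x) < e" using Z_near[OF aZ e] by blast
    have "pF a (K x) < pF a a + e"
      using x pF_bound(1)[OF aF K_in[OF x(1)]] by (simp add: abs_le_iff)
    then show ?thesis using x KX_Z by (auto simp: pball_def)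
  qed
qed

lemma noext: "\<not> (\<exists>ft. isometric_embedding (Z \<union> {T}) pF Z pF ft \<and> (\<forall>x\<in>X. ft (K x) = K x))"
proof
  assume "\<exists>ft. isometric_embedding (Z \<union> {T}) pF Z pF ft \<and> (\<forall>x\<in>X. ft (K x) = K x)"
  then obtain ft where iso: "isometric_embedding (Z \<union> {T}) pF Z pF ft" and fx: "\<forall>x\<in>X. ft (K x) = K x"
    by blast
  define y where "y = ft T"
  have yZ: "y \<in> Z" using iso by (auto simp: isometric_embedding_def y_def)
  then have yF: "y \<in> FS" using Z_F by auto
  obtain x where x: "x \<in> X" "FD y (K x) < 1" using Z_near[OF yZ zero_less_one] by auto
  have "pF y y = pF T T" using iso by (auto simp: isometric_embedding_def y_def)
  moreover have "pF y (K x) = pF T (K x)"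
  proof -
    have isoD: "\<And>a b. a \<in> Z \<union> {T} \<Longrightarrow> b \<in> Z \<union> {T} \<Longrightarrow> pF (ft a) (ft b) = pF a b"
      using iso unfolding isometric_embedding_def by blast
    have "K x \<in> Z" using KX_Z x(1) by auto
    then have "pF (ft T) (ft (K x)) = pF T (K x)" by (intro isoD) auto
    then show ?thesis using fx x(1) by (simp add: y_def)
  qed
  ultimately have "FD y (K x) = FD T (K x)"
    using pF_self[OF yF] pF_self[OF T_in] pF2[of y "K x"] pF2[of T "K x"] by linarith
  then show False using x FD_TK[OF x(1)] dd_nonneg[OF x0X x(1)] by simp
qed

end



context
  fixes g :: "'b \<Rightarrow> 'c" and B :: "'b set"
  assumes inj: "inj_on g B"
begin

abbreviation "hh \<equiv> inv_into B g"

lemma hg: "x \<in> B \<Longrightarrow> hh (g x) = x"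
  using inj by (simp add: inv_into_f_f)

lemma TR1: assumes "A \<subseteq> B" "partial_metric A p"
  shows "partial_metric (g ` A) (\<lambda>a b. p (hh a) (hh b))"
  using assms unfolding partial_metric_def
  by (auto simp: hg subset_iff)

lemma TR2: assumes "A \<subseteq> B" "p_complete A p"
  shows "p_complete (g ` A) (\<lambda>a b. p (hh a) (hh b))"
  unfolding p_complete_def
proof (intro allI impI)
  fix s assume s: "range s \<subseteq> g ` A \<and> p_cauchy (\<lambda>a b. p (hh a) (hh b)) s"
  have "range (hh \<circ> s) \<subseteq> A" using s assms(1) by (auto simp: hg subset_iff)
  moreover have "p_cauchy p (hh \<circ> s)" using s by (simp add: p_cauchy_def)
  ultimately obtain x where x: "x \<in> A" "p_converges p (hh \<circ> s) x"
    using assms(2) unfolding p_complete_def by blast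
  have "p_converges (\<lambda>a b. p (hh a) (hh b)) s (g x)"
    using x assms(1) by (auto simp: p_converges_def hg subset_iff)
  then show "\<exists>x\<in>g ` A. p_converges (\<lambda>a b. p (hh a) (hh b)) s x" using x by blast
qed

lemma TR3: assumes "A \<subseteq> B" "isometric_embedding X p0 A p k"
  shows "isometric_embedding X p0 (g ` A) (\<lambda>a b. p (hh a) (hh b)) (g \<circ> k)"
  using assms unfolding isometric_embedding_def by (auto simp: hg subset_iff)

lemma TR4: assumes "A \<subseteq> B" "p_dense A p (k ` X)"
  shows "p_dense (g ` A) (\<lambda>a b. p (hh a) (hh b)) ((g \<circ> k) ` X)"
  unfolding p_dense_def
proof (intro conjI ballI allI impI)
  show "(g \<circ> k) ` X \<subseteq> g ` A" using assms(2) by (auto simp: p_dense_def)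
  fix a e assume a: "a \<in> g ` A" and e: "(e::real) > 0"
  then obtain x where x: "x \<in> A" "a = g x" by blast
  then obtain y where y: "y \<in> k ` X" "y \<in> pball A p x e" using assms(2) e unfolding p_dense_def by blast
  have yA: "y \<in> A" using y by (auto simp: pball_def)
  have "g y \<in> pball (g ` A) (\<lambda>a b. p (hh a) (hh b)) a e"
    using y yA x assms(1) by (auto simp: pball_def hg subset_iff)
  then show "\<exists>y\<in>(g \<circ> k) ` X. y \<in> pball (g ` A) (\<lambda>a b. p (hh a) (hh b)) a e"
    using y(1) by auto
qed

lemma TR5: assumes "A1 \<subseteq> B" "A2 \<subseteq> B" "k ` X \<subseteq> A1" "k' ` X \<subseteq> A2"
  and "isometric_embedding (g ` A1) (\<lambda>a b. p (hh a) (hh b)) (g ` A2) (\<lambda>a b. p (hh a) (hh b)) ft"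
  and "\<forall>x\<in>X. ft ((g \<circ> k) x) = (g \<circ> k') x"
  shows "\<exists>ft'. isometric_embedding A1 p A2 p ft' \<and> (\<forall>x\<in>X. ft' (k x) = k' x)"
proof (intro exI conjI)
  have "hh (ft (g x)) \<in> A2" if "x \<in> A1" for x
  proof -
    have "ft (g x) \<in> g ` A2" using assms(5) that by (auto simp: isometric_embedding_def)
    then obtain y where "y \<in> A2" "ft (g x) = g y" by blast
    then show ?thesis using assms(2) hg by auto
  qed
  then show "isometric_embedding A1 p A2 p (hh \<circ> ft \<circ> g)"
    using assms(1,2,5) unfolding isometric_embedding_def
    by (auto simp: hg subset_iff)
  show "\<forall>x\<in>X. (hh \<circ> ft \<circ> g) (k x) = k' x"
    using assms(2,4,6) by (auto simp: hg subset_iff)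
qed

end

context pmctx
begin

interpretation F: Metric_space FS FD by (rule F_ms)

definition enc :: "('a option \<Rightarrow> real) \<Rightarrow> (nat \<Rightarrow> 'a) set \<times> real" where
  "enc a = ({s. range s \<subseteq> X \<and> (\<forall>n. FD (K (s n)) a < inverse (real (Suc n)))}, 0)"

lemma enc_ne: assumes "a \<in> Z" shows "fst (enc a) \<noteq> {}"
proof -
  have "\<forall>n. \<exists>x. x \<in> X \<and> FD (K x) a < inverse (real (Suc n))"
  proof
    fix n
    obtain x where "x \<in> X" "FD a (K x) < inverse (real (Suc n))"
      using Z_near[OF assms, of "inverse (real (Suc n))"] by auto
    then show "\<exists>x. x \<in> X \<and> FD (K x) a < inverse (real (Suc n))"
      using F.commute[of a "K x"] by auto
  qed
  then obtain s where "\<forall>n. s n \<in> X \<and> FD (K (s n)) a < inverse (real (Suc n))"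
    by metis
  then have "s \<in> fst (enc a)" by (auto simp: enc_def)
  then show ?thesis by blast
qed

lemma enc_T: "fst (enc T) = {}"
proof -
  have "\<not> FD (K x) T < inverse (real (Suc 0))" if "x \<in> X" for x
    using FD_TK[OF that] dd_nonneg[OF x0X that] F.commute[of T "K x"] by simp
  note * = this
  have "s \<notin> fst (enc T)" for s
  proof
    assume "s \<in> fst (enc T)"
    then have h: "range s \<subseteq> X \<and> (\<forall>n. FD (K (s n)) T < inverse (real (Suc n)))"
      by (simp only: enc_def fst_conv mem_Collect_eq simp_thms)
    then have "s 0 \<in> X" by auto
    with * h show False by blast
  qed
  then show ?thesis by blast
qed

lemma enc_inj: "inj_on enc (Z \<union> {T})"
proof (rule inj_onI)
  fix a b assume a: "a \<in> Z \<union> {T}" and b: "b \<in> Z \<union> {T}" and e: "enc a = enc b"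
  show "a = b"
  proof (cases "a = T \<or> b = T")
    case True
    then show ?thesis using a b e enc_T enc_ne by (metis Un_iff singletonD)
  next
    case False
    then have aZ: "a \<in> Z" and bZ: "b \<in> Z" using a b by auto
    then have aF: "a \<in> FS" and bF: "b \<in> FS" using Z_F by auto
    obtain s where s: "s \<in> fst (enc a)" using enc_ne[OF aZ] by blast
    then have sb: "s \<in> fst (enc b)" using e by simp
    have "FD a b = 0"
    proof (rule ccontr)
      assume "FD a b \<noteq> 0"
      then have "FD a b > 0" using F.nonneg[of a b] by linarith
      then have pos: "FD a b / 2 > 0" by simp
      obtain n where n: "inverse (real (Suc n)) < FD a b / 2"
        using reals_Archimedean[OF pos] by blast
      have sX: "s n \<in> X" using s by (auto simp: enc_def)
      have "FD (K (s n)) a < inverse (real (Suc n))" "FD (K (s n)) b < inverse (real (Suc n))"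
        using s sb by (auto simp: enc_def)
      moreover have "FD a b \<le> FD (K (s n)) a + FD (K (s n)) b"
        using F.triangle[of a "K (s n)" b] F.commute[of a "K (s n)"] K_in[OF sX] aF bF by simp
      ultimately show False using n by linarith
    qed
    then show ?thesis using F.zero[OF aF bF] by simp
  qed
qed

end

theorem theorem1p9:
  fixes X :: "'a set" and p :: "'a \<Rightarrow> 'a \<Rightarrow> real"
  assumes "partial_metric X p" and "X \<noteq> {}"
  shows "\<exists>(Xt :: ((nat \<Rightarrow> 'a) set \<times> real) set) pt j
            (Y :: ((nat \<Rightarrow> 'a) set \<times> real) set) q f.
           p_cauchy_completion X p Xt pt j \<and>
           partial_metric Y q \<and> p_complete Y q \<and>
           isometric_embedding X p Y q f \<and>
           \<not> (\<exists>ft. isometric_embedding Xt pt Y q ft \<and> (\<forall>x\<in>X. ft (j x) = f x))"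
proof -
  obtain x0 where x0: "x0 \<in> X" using assms(2) by blast
  interpret C: pmctx X p x0 using assms(1) x0 by unfold_locales
  define B where "B = C.Z \<union> {C.T}"
  define q where "q = (\<lambda>a b. C.pF (inv_into B C.enc a) (inv_into B C.enc b))"
  have inj: "inj_on C.enc B" unfolding B_def by (rule C.enc_inj)
  have ZB: "C.Z \<subseteq> B" and BB: "B \<subseteq> B" by (auto simp: B_def)
  have iso: "isometric_embedding X p A C.pF C.K" if "C.K ` X \<subseteq> A" for A
    using that C.pF_K by (auto simp: isometric_embedding_def)
  have KZ: "C.K ` X \<subseteq> C.Z" by (rule C.KX_Z)
  have KB: "C.K ` X \<subseteq> B" using KZ ZB by auto
  have BF: "B \<subseteq> C.FS" using C.Z_F C.T_in by (auto simp: B_def)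
  have c1: "p_cauchy_completion X p (C.enc ` B) q (C.enc \<circ> C.K)"
    unfolding p_cauchy_completion_def q_def
  proof (intro conjI)
    show "partial_metric (C.enc ` B) (\<lambda>a b. C.pF (inv_into B C.enc a) (inv_into B C.enc b))"
      by (rule TR1[OF inj BB C.pm_F[OF BF]])
    show "p_complete (C.enc ` B) (\<lambda>a b. C.pF (inv_into B C.enc a) (inv_into B C.enc b))"
      by (rule TR2[OF inj BB C.complete_F]) (unfold B_def, rule C.ZT_closed)
    show "isometric_embedding X p (C.enc ` B) (\<lambda>a b. C.pF (inv_into B C.enc a) (inv_into B C.enc b)) (C.enc \<circ> C.K)"
      by (rule TR3[OF inj BB iso[OF KB]])
    show "p_dense (C.enc ` B) (\<lambda>a b. C.pF (inv_into B C.enc a) (inv_into B C.enc b)) ((C.enc \<circ> C.K) ` X)"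
      by (rule TR4[OF inj BB]) (unfold B_def, rule C.dense_ZT)
  qed
  have c2: "partial_metric (C.enc ` C.Z) q" unfolding q_def
    by (rule TR1[OF inj ZB C.pm_F]) (use C.Z_F in auto)
  have c3: "p_complete (C.enc ` C.Z) q" unfolding q_def
    by (rule TR2[OF inj ZB C.complete_F]) simp
  have c4: "isometric_embedding X p (C.enc ` C.Z) q (C.enc \<circ> C.K)" unfolding q_def
    by (rule TR3[OF inj ZB iso[OF KZ]])
  have c5: "\<not> (\<exists>ft. isometric_embedding (C.enc ` B) q (C.enc ` C.Z) q ft \<and>
                 (\<forall>x\<in>X. ft ((C.enc \<circ> C.K) x) = (C.enc \<circ> C.K) x))"
  proof
    assume "\<exists>ft. isometric_embedding (C.enc ` B) q (C.enc ` C.Z) q ft \<and>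
                 (\<forall>x\<in>X. ft ((C.enc \<circ> C.K) x) = (C.enc \<circ> C.K) x)"
    then obtain ft where ft: "isometric_embedding (C.enc ` B) q (C.enc ` C.Z) q ft"
      "\<forall>x\<in>X. ft ((C.enc \<circ> C.K) x) = (C.enc \<circ> C.K) x" by blast
    have "\<exists>ft'. isometric_embedding B C.pF C.Z C.pF ft' \<and> (\<forall>x\<in>X. ft' (C.K x) = C.K x)"
      by (rule TR5[OF inj BB ZB KB KZ ft(1)[unfolded q_def] ft(2)])
    then show False using C.noext unfolding B_def by blast
  qed
  show ?thesis using c1 c2 c3 c4 c5 by blast
qed

end
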